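(* Let $N\ge1$, let $\phi:H_0(S_N)\to M_N$ be the quotient morphism sending $\pi_i\mapsto\pi_i$, where $M_N$ is the quotient of $H_0(S_N)$ by the relations $\pi_i\pi_{i+1}\pi_i=\pi_i\pi_{i+1}$ ($1\le i\le N-2$), and let $\Psi$ be the automorphism of $H_0(S_N)$ with $\Psi(\pi_i)=\pi_{N-i}$. For every $m\in M_N$ let $G_m=\{w\in S_N: \phi(\Psi(\pi_w))=m\}$. Every nonempty $G_m$ contains a unique $[321]$-avoiding permutation, which is of minimal length in $G_m$, and a unique $[312]$-avoiding permutation, which is of maximal length in $G_m$.
   Context: $S_N$ is generated by simple transpositions $s_1,\dots,s_{N-1}$; permutations are in one-line notation and composed as functions, $(uv)(j)=u(v(j))$, so $xs_i$ swaps the entries in positions $i,i+1$. $\operatorname{len}$ is Coxeter length (number of inversions). $H_0(S_N)$ is generated by $\pi_1,\dots,\pi_{N-1}$ with relations $\pi_i^2=\pi_i$, $\pi_i\pi_j=\pi_j\pi_i$ for $|i-j|\ge2$, $\pi_i\pi_{i+1}\pi_i=\pi_{i+1}\pi_i\pi_{i+1}$; $\pi_w:=\pi_{i_1}\cdots\pi_{i_k}$ for any reduced word $w=s_{i_1}\cdots s_{i_k}$, giving a bijection $S_N\to H_0(S_N)$. A permutation contains a pattern $\sigma\in S_k$ if some subsequence of its one-line notation is in the same relative order as $\sigma$; otherwise it avoids $\sigma$. *)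

theory Defs
  imports "HOL-Combinatorics.Permutations"
begin

text \<open>Permutations of S_N are functions w with w permutes {1..N}; one-line notation is
  w 1, ..., w N. Words in the generators are lists of indices i (standing for s_i / pi_i).\<close>

definition s_gen :: "nat \<Rightarrow> nat \<Rightarrow> nat" where
  "s_gen i = Transposition.transpose i (Suc i)"

definition word_prod :: "nat list \<Rightarrow> nat \<Rightarrow> nat" where
  "word_prod ws = foldr (\<lambda>i p. s_gen i \<circ> p) ws id"

definition len :: "nat \<Rightarrow> (nat \<Rightarrow> nat) \<Rightarrow> nat" where
  "len N w = card {(i, j). 1 \<le> i \<and> i < j \<and> j \<le> N \<and> w i > w j}"

definition reduced_word :: "nat \<Rightarrow> (nat \<Rightarrow> nat) \<Rightarrow> nat list \<Rightarrow> bool" where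
  "reduced_word N w ws \<longleftrightarrow> set ws \<subseteq> {1..N-1} \<and> word_prod ws = w \<and> length ws = len N w"

text \<open>The congruence on words (free monoid on pi_1..pi_{N-1}) generated by the
  0-Hecke relations together with the extra relations pi_i pi_{i+1} pi_i = pi_i pi_{i+1};
  the quotient of the free monoid by it is M_N.\<close>
inductive mcong :: "nat \<Rightarrow> nat list \<Rightarrow> nat list \<Rightarrow> bool" for N where
  idem: "1 \<le> i \<Longrightarrow> i \<le> N - 1 \<Longrightarrow> mcong N [i, i] [i]"
| comm: "1 \<le> i \<Longrightarrow> i \<le> N - 1 \<Longrightarrow> 1 \<le> j \<Longrightarrow> j \<le> N - 1 \<Longrightarrow> i + 2 \<le> j
          \<Longrightarrow> mcong N [i, j] [j, i]"
| braid: "1 \<le> i \<Longrightarrow> i + 1 \<le> N - 1 \<Longrightarrow> mcong N [i, Suc i, i] [Suc i, i, Suc i]"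
| extra: "1 \<le> i \<Longrightarrow> i \<le> N - 2 \<Longrightarrow> mcong N [i, Suc i, i] [i, Suc i]"
| refl: "mcong N a a"
| sym: "mcong N a b \<Longrightarrow> mcong N b a"
| trans: "mcong N a b \<Longrightarrow> mcong N b c \<Longrightarrow> mcong N a c"
| ctxt: "mcong N a b \<Longrightarrow> mcong N (u @ a @ v) (u @ b @ v)"

definition Psi_word :: "nat \<Rightarrow> nat list \<Rightarrow> nat list" where
  "Psi_word N ws = map (\<lambda>i. N - i) ws"

text \<open>phi(Psi(pi_w)) as an element of M_N, i.e. a congruence class of words.\<close>
definition phiPsi :: "nat \<Rightarrow> (nat \<Rightarrow> nat) \<Rightarrow> nat list set" where
  "phiPsi N w = {b. \<exists>a. reduced_word N w a \<and> mcong N (Psi_word N a) b}"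

definition G :: "nat \<Rightarrow> nat list set \<Rightarrow> (nat \<Rightarrow> nat) set" where
  "G N m = {w. w permutes {1..N} \<and> phiPsi N w = m}"

definition contains_pattern :: "nat \<Rightarrow> (nat \<Rightarrow> nat) \<Rightarrow> nat list \<Rightarrow> bool" where
  "contains_pattern N w pat \<longleftrightarrow> (\<exists>idx. length idx = length pat \<and> sorted_wrt (<) idx \<and>
      set idx \<subseteq> {1..N} \<and>
      (\<forall>a < length pat. \<forall>b < length pat. w (idx ! a) < w (idx ! b) \<longleftrightarrow> pat ! a < pat ! b))"

definition avoids :: "nat \<Rightarrow> (nat \<Rightarrow> nat) \<Rightarrow> nat list \<Rightarrow> bool" where
  "avoids N w pat \<longleftrightarrow> \<not> contains_pattern N w pat"

end

theory Submission
  imports Defs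
begin


definition fu :: "nat \<Rightarrow> nat \<Rightarrow> nat" where
  "fu k x = (if x = k then Suc k else x)"

definition Fw :: "nat list \<Rightarrow> nat \<Rightarrow> nat" where
  "Fw ws = foldr (\<lambda>k g. fu k \<circ> g) ws id"

lemma Fw_Nil[simp]: "Fw [] = id" by (simp add: Fw_def)
lemma Fw_Cons[simp]: "Fw (k # ws) = fu k \<circ> Fw ws" by (simp add: Fw_def)
lemma Fw_append[simp]: "Fw (xs @ ys) = Fw xs \<circ> Fw ys"
  by (induction xs) auto

lemma fu_idem: "fu k \<circ> fu k = fu k" by (auto simp: fu_def fun_eq_iff)
lemma fu_comm: "a \<noteq> Suc b \<Longrightarrow> b \<noteq> Suc a \<Longrightarrow> fu a \<circ> fu b = fu b \<circ> fu a"
  by (auto simp: fu_def fun_eq_iff)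
lemma fu_braid: "fu (Suc k) \<circ> fu k \<circ> fu (Suc k) = fu k \<circ> fu (Suc k) \<circ> fu k"
  by (auto simp: fu_def fun_eq_iff)
lemma fu_extra: "fu (Suc k) \<circ> fu k \<circ> fu (Suc k) = fu (Suc k) \<circ> fu k"
  by (auto simp: fu_def fun_eq_iff)

definition H :: "nat \<Rightarrow> nat list \<Rightarrow> nat \<Rightarrow> nat" where
  "H N ws = Fw (map (\<lambda>j. N - j) ws)"

lemma mcong_H: "mcong N a b \<Longrightarrow> H N a = H N b"
proof (induction rule: mcong.induct)
  case (idem i) then show ?case by (simp add: H_def fu_idem)
next
  case (comm i j) then show ?case by (simp add: H_def fu_comm)
next
  case (braid i)
  then obtain k where k: "N - i = Suc k" "N - Suc i = k" by (intro that[of "N - Suc i"]) auto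
  show ?case using fu_braid[of k] by (simp add: H_def k o_assoc)
next
  case (extra i)
  then obtain k where k: "N - i = Suc k" "N - Suc i = k" by (intro that[of "N - Suc i"]) auto
  show ?case using fu_extra[of k] by (simp add: H_def k o_assoc)
qed (auto simp: H_def)

lemma H_Psi: "set a \<subseteq> {..N} \<Longrightarrow> H N (Psi_word N a) = Fw a"
proof -
  assume "set a \<subseteq> {..N}"
  then have "map (\<lambda>j. N - j) (map (\<lambda>i. N - i) a) = a"
    by (induction a) auto
  then show ?thesis by (simp add: H_def Psi_word_def)
qed

definition rc :: "nat \<Rightarrow> nat list \<Rightarrow> nat list \<Rightarrow> bool" where
  "rc N a b \<longleftrightarrow> mcong N (Psi_word N a) (Psi_word N b)"

lemma rc_refl: "rc N a a" by (simp add: rc_def mcong.refl)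
lemma rc_sym: "rc N a b \<Longrightarrow> rc N b a" by (simp add: rc_def mcong.sym)
lemma rc_trans: "rc N a b \<Longrightarrow> rc N b c \<Longrightarrow> rc N a c" unfolding rc_def by (rule mcong.trans)
lemma rc_ctxt: "rc N a b \<Longrightarrow> rc N (u @ a @ v) (u @ b @ v)"
  unfolding rc_def Psi_word_def by (simp add: mcong.ctxt[unfolded Psi_word_def])
lemma rc_ctxt': "rc N a b \<Longrightarrow> rc N (u @ a) (u @ b)"
  using rc_ctxt[of N a b u "[]"] by simp
lemma rc_ctxt'': "rc N a b \<Longrightarrow> rc N (a @ v) (b @ v)"
  using rc_ctxt[of N a b "[]" v] by simp

lemma rc_idem: "1 \<le> k \<Longrightarrow> k \<le> N - 1 \<Longrightarrow> rc N [k, k] [k]"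
  unfolding rc_def Psi_word_def using mcong.idem[of "N - k" N] by simp
lemma rc_comm: "1 \<le> a \<Longrightarrow> b \<le> N - 1 \<Longrightarrow> a + 2 \<le> b \<Longrightarrow> rc N [b, a] [a, b]"
  unfolding rc_def Psi_word_def using mcong.comm[of "N - b" N "N - a"] by simp
lemma rc_braid: "1 \<le> k \<Longrightarrow> k + 1 \<le> N - 1 \<Longrightarrow> rc N [k, Suc k, k] [Suc k, k, Suc k]"
proof -
  assume a: "1 \<le> k" "k + 1 \<le> N - 1"
  have e: "N - k = Suc (N - Suc k)" using a by auto
  show ?thesis unfolding rc_def Psi_word_def
    using mcong.sym[OF mcong.braid[of "N - Suc k" N]] a by (simp add: e)
qed
lemma rc_extra: "1 \<le> k \<Longrightarrow> k + 1 \<le> N - 1 \<Longrightarrow> rc N [Suc k, k, Suc k] [Suc k, k]"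
proof -
  assume a: "1 \<le> k" "k + 1 \<le> N - 1"
  have e: "N - k = Suc (N - Suc k)" using a by auto
  show ?thesis unfolding rc_def Psi_word_def
    using mcong.extra[of "N - Suc k" N] a by (simp add: e)
qed



definition D :: "nat \<Rightarrow> nat \<Rightarrow> nat list" where
  "D b k = rev [k..<b]"

lemma D_split: "k < b \<Longrightarrow> D b k = D b (Suc k) @ [k]"
  by (simp add: D_def upt_conv_Cons)
lemma D_empty: "b \<le> k \<Longrightarrow> D b k = []"
  by (simp add: D_def)
lemma D_top: "k \<le> b \<Longrightarrow> D (Suc b) k = b # D b k"
  by (simp add: D_def)
lemma set_D: "set (D b k) = {k..<b}"
  by (simp add: D_def)
lemma D_mid: "k \<le> x \<Longrightarrow> x < b \<Longrightarrow> D b k = D b (Suc x) @ [x] @ D x k"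
proof -
  assume a: "k \<le> x" "x < b"
  have "[k..<b] = [k..<x] @ [x..<b]" using a upt_add_eq_append[of k x "b - x"] by simp
  moreover have "[x..<b] = x # [Suc x..<b]" using a by (simp add: upt_conv_Cons)
  ultimately show ?thesis by (simp add: D_def)
qed

lemma rc_commute_list:
  assumes "\<forall>y\<in>set w. (y + 2 \<le> k \<or> k + 2 \<le> y) \<and> 1 \<le> y \<and> y \<le> N - 1"
    and "1 \<le> k" "k \<le> N - 1"
  shows "rc N (k # w) (w @ [k])"
  using assms(1)
proof (induction w)
  case Nil then show ?case by (simp add: rc_refl)
next
  case (Cons y w)
  have 1: "rc N [k, y] [y, k]"
  proof (cases "y + 2 \<le> k")
    case True then show ?thesis using rc_comm[of y k N] Cons.prems assms by auto
  next
    case False then show ?thesis using rc_sym[OF rc_comm[of k y N]] Cons.prems assms by auto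
  qed
  have 2: "rc N (k # y # w) (y # k # w)" using rc_ctxt''[OF 1, of w] by simp
  have 3: "rc N (y # k # w) (y # w @ [k])" using rc_ctxt'[OF Cons.IH, of "[y]"] Cons.prems by simp
  show ?case using rc_trans[OF 2 3] by simp
qed

lemma rc_Abs:
  assumes "k \<le> x" "x < b" "b \<le> N" "1 \<le> k"
  shows "rc N (x # D b k) (D b k)"
proof (cases "Suc x = b")
  case True
  have e: "D b k = [x] @ D x k" using D_mid[of k x b] assms True by (simp add: D_empty)
  show ?thesis unfolding e using rc_ctxt''[OF rc_idem[of x N], of "D x k"] assms by simp
next
  case False
  have e: "D b k = D b (Suc (Suc x)) @ [Suc x, x] @ D x k"
    using D_mid[of k x b] D_split[of "Suc x" b] assms False by simp
  have c: "rc N (x # D b (Suc (Suc x))) (D b (Suc (Suc x)) @ [x])"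
    by (rule rc_commute_list) (use assms in \<open>auto simp: set_D\<close>)
  have 1: "rc N (x # D b (Suc (Suc x)) @ [Suc x, x] @ D x k) (D b (Suc (Suc x)) @ [x, Suc x, x] @ D x k)"
    using rc_ctxt''[OF c, of "[Suc x, x] @ D x k"] by simp
  have br: "rc N [x, Suc x, x] [Suc x, x]"
    using rc_trans[OF rc_braid[of x N] rc_extra[of x N]] assms False by auto
  have 2: "rc N (D b (Suc (Suc x)) @ [x, Suc x, x] @ D x k) (D b (Suc (Suc x)) @ [Suc x, x] @ D x k)"
    by (rule rc_ctxt[OF br])
  show ?thesis unfolding e using rc_trans[OF 1 2] by simp
qed

lemma rc_AbsR:
  assumes "p \<le> k" "k < a" "a \<le> N" "1 \<le> p"
  shows "rc N (D a p @ [k]) (D a p)"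
proof (cases "k = p")
  case True
  have e: "D a p = D a (Suc k) @ [k]" using D_split assms True by simp
  show ?thesis unfolding e using rc_ctxt'[OF rc_idem[of k N], of "D a (Suc k)"] assms by simp
next
  case False
  obtain j where j: "k = Suc j" using False assms by (cases k) auto
  have e: "D a p = D a (Suc k) @ [k, j] @ D j p"
    using D_mid[of p k a] D_top[of p j] assms False j by simp
  have c: "rc N (k # D j p) (D j p @ [k])"
    by (rule rc_commute_list) (use assms j in \<open>auto simp: set_D\<close>)
  have 1: "rc N (D a (Suc k) @ [k, j] @ D j p @ [k]) (D a (Suc k) @ [k, j, k] @ D j p)"
    using rc_ctxt[OF rc_sym[OF c], of "D a (Suc k) @ [k, j]" "[]"] by simp
  have ex: "rc N [k, j, k] [k, j]" using rc_extra[of j N] j assms False by auto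
  have 2: "rc N (D a (Suc k) @ [k, j, k] @ D j p) (D a (Suc k) @ [k, j] @ D j p)"
    by (rule rc_ctxt[OF ex])
  show ?thesis unfolding e using rc_trans[OF 1 2] by simp
qed

lemma rc_absorb_list:
  assumes "\<forall>x\<in>set w. k \<le> x \<and> x < b" "b \<le> N" "1 \<le> k"
  shows "rc N (w @ D b k) (D b k)"
  using assms(1)
proof (induction w)
  case Nil then show ?case by (simp add: rc_refl)
next
  case (Cons x w)
  have "rc N ([x] @ w @ D b k) ([x] @ D b k)" using rc_ctxt'[OF Cons.IH, of "[x]"] Cons.prems by simp
  moreover have "rc N (x # D b k) (D b k)" using rc_Abs assms Cons.prems by auto
  ultimately show ?case using rc_trans by fastforce
qed



definition blk :: "(nat \<Rightarrow> nat) \<Rightarrow> nat \<Rightarrow> nat list" where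
  "blk g x = (if x = 1 \<or> g (x - 1) \<noteq> g x then D (g x) x else [])"

definition nfw :: "nat \<Rightarrow> (nat \<Rightarrow> nat) \<Rightarrow> nat list" where
  "nfw N g = concat (map (blk g) [1..<Suc N])"

definition inS :: "nat \<Rightarrow> (nat \<Rightarrow> nat) \<Rightarrow> bool" where
  "inS N g \<longleftrightarrow> (\<forall>x. 1 \<le> x \<and> x \<le> N \<longrightarrow> x \<le> g x \<and> g x \<le> N) \<and>
      (\<forall>x y. 1 \<le> x \<and> x \<le> y \<and> y \<le> N \<longrightarrow> g x \<le> g y)"

lemma concat_empty: "\<forall>x\<in>set xs. blk g x = [] \<Longrightarrow> concat (map (blk g) xs) = []"
  by (induction xs) auto

lemma Lblock:
  assumes "1 \<le> p" "p < q" "p = 1 \<or> g (p - 1) \<noteq> g p" "\<forall>x. p < x \<and> x < q \<longrightarrow> g (x - 1) = g x"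
  shows "concat (map (blk g) [p..<q]) = D (g p) p"
proof -
  have "[p..<q] = p # [Suc p..<q]" using assms by (simp add: upt_conv_Cons)
  moreover have "concat (map (blk g) [Suc p..<q]) = []"
  proof (rule concat_empty, rule ballI)
    fix x assume "x \<in> set [Suc p..<q]"
    then have "p < x" "x < q" by auto
    then have "x \<noteq> 1" "g (x - 1) = g x" using assms(1,4) by auto
    then show "blk g x = []" unfolding blk_def by simp
  qed
  ultimately show ?thesis using assms by (simp add: blk_def)
qed

lemma blk_letters: "y \<in> set (blk g x) \<Longrightarrow> x \<le> y \<and> y < g x"
proof -
  assume "y \<in> set (blk g x)"
  then have "y \<in> set (D (g x) x)" unfolding blk_def by (metis empty_iff empty_set)
  then show ?thesis by (simp add: set_D)
qed

lemma nfw_id: "nfw N id = []"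
proof -
  have "\<forall>x\<in>set [1..<Suc N]. blk id x = []" by (simp add: blk_def D_empty)
  then show ?thesis unfolding nfw_def by (rule concat_empty)
qed

lemma inS_fu: "inS N g \<Longrightarrow> 1 \<le> k \<Longrightarrow> k \<le> N - 1 \<Longrightarrow> inS N (fu k \<circ> g)"
proof -
  assume g: "inS N g" and k: "1 \<le> k" "k \<le> N - 1"
  have m: "fu k x \<le> fu k y" if "x \<le> y" for x y using that by (auto simp: fu_def)
  have e: "x \<le> fu k x" for x by (auto simp: fu_def)
  have b: "x \<le> N \<Longrightarrow> fu k x \<le> N" for x using k by (auto simp: fu_def)
  show ?thesis using g m e b unfolding inS_def o_def by (meson le_trans)
qed



lemma blk_cong: "g (x - 1) = g' (x - 1) \<Longrightarrow> g x = g' x \<Longrightarrow> blk g x = blk g' x"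
  by (simp add: blk_def)

lemma inS_bound: "inS N g \<Longrightarrow> 1 \<le> x \<Longrightarrow> x \<le> N \<Longrightarrow> x \<le> g x \<and> g x \<le> N"
  unfolding inS_def by blast
lemma inS_mono: "inS N g \<Longrightarrow> 1 \<le> x \<Longrightarrow> x \<le> y \<Longrightarrow> y \<le> N \<Longrightarrow> g x \<le> g y"
  unfolding inS_def by blast

lemma rc_right:
  assumes g: "inS N g" and k: "1 \<le> k" "k \<le> N - 1"
  shows "rc N (nfw N g @ [k]) (nfw N (g \<circ> fu k))"
proof -
  define a where "a = g k"
  define b where "b = g (Suc k)"
  define g' where "g' = g \<circ> fu k"
  have kN: "Suc k \<le> N" using k by auto
  have ab: "a \<le> b" "k \<le> a" "Suc k \<le> b" "b \<le> N"
    using inS_bound[OF g, of k] inS_bound[OF g, of "Suc k"] inS_mono[OF g, of k "Suc k"] k kN unfolding a_def b_def by auto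
  have g'k: "g' k = b" by (simp add: g'_def b_def fu_def)
  have g'o: "x \<noteq> k \<Longrightarrow> g' x = g x" for x by (simp add: g'_def fu_def)
  obtain p where p: "1 \<le> p \<and> p \<le> k \<and> g p = a" "\<forall>y. 1 \<le> y \<and> y \<le> k \<and> g y = a \<longrightarrow> p \<le> y"
    using ex_has_least_nat[of "\<lambda>y. 1 \<le> y \<and> y \<le> k \<and> g y = a" k id] k a_def by auto
  have const: "g x = a" if "p \<le> x" "x \<le> k" for x
  proof -
    have "g p \<le> g x" "g x \<le> g k" using inS_mono[OF g, of p x] inS_mono[OF g, of x k] that p(1) k kN by auto
    then show ?thesis using p(1) a_def by auto
  qed
  have pstart: "p = 1 \<or> g (p - 1) \<noteq> g p"
  proof (rule ccontr)
    assume "\<not> ?thesis"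
    then have h: "1 \<le> p - 1 \<and> p - 1 \<le> k \<and> g (p - 1) = a" using p(1) by auto
    have "p \<le> p - 1" using p(2) h by blast
    then show False using p(1) by linarith
  qed
  define Pre where "Pre = concat (map (blk g) [1..<p])"
  define Suf where "Suf = concat (map (blk g) [Suc (Suc k)..<Suc N])"
  have split: "[1..<Suc N] = [1..<p] @ [p..<k] @ [k] @ [Suc k] @ [Suc (Suc k)..<Suc N]"
  proof -
    have "[1..<Suc N] = [1..<p] @ [p..<Suc N]" using upt_add_eq_append[of 1 p "Suc N - p"] p(1) kN by simp
    moreover have "[p..<Suc N] = [p..<k] @ [k..<Suc N]" using upt_add_eq_append[of p k "Suc N - k"] p(1) kN by simp
    moreover have "[k..<Suc N] = [k, Suc k] @ [Suc (Suc k)..<Suc N]" using kN by (simp add: upt_conv_Cons)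
    ultimately show ?thesis by simp
  qed
  have nfg: "nfw N g = Pre @ concat (map (blk g) [p..<k]) @ blk g k @ blk g (Suc k) @ Suf"
    unfolding nfw_def Pre_def Suf_def by (subst split) simp
  have pre': "concat (map (blk g') [1..<p]) = Pre"
    unfolding Pre_def by (rule arg_cong[where f=concat], rule map_cong[OF HOL.refl], rule blk_cong) (use p(1) g'o in auto)
  have suf': "concat (map (blk g') [Suc (Suc k)..<Suc N]) = Suf"
    unfolding Suf_def by (rule arg_cong[where f=concat], rule map_cong[OF HOL.refl], rule blk_cong) (use g'o in auto)
  have mid': "concat (map (blk g') [p..<k]) = concat (map (blk g) [p..<k])"
    by (rule arg_cong[where f=concat], rule map_cong[OF HOL.refl], rule blk_cong) (use g'o in auto)
  have nfg': "nfw N g' = Pre @ concat (map (blk g) [p..<k]) @ blk g' k @ blk g' (Suc k) @ Suf"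
    unfolding nfw_def by (subst split) (simp only: map_append concat_append list.map concat.simps append_Nil2 pre' suf' mid' append.assoc)
  have mid: "concat (map (blk g) [p..<k]) @ blk g k = D a p"
  proof -
    have "concat (map (blk g) [p..<Suc k]) = D (g p) p"
    proof (rule Lblock)
      show "\<forall>x. p < x \<and> x < Suc k \<longrightarrow> g (x - 1) = g x"
      proof (intro allI impI)
        fix x assume "p < x \<and> x < Suc k"
        then have "g (x - 1) = a" "g x = a" using const[of "x - 1"] const[of x] by auto
        then show "g (x - 1) = g x" by simp
      qed
    qed (use p pstart in auto)
    moreover have "[p..<Suc k] = [p..<k] @ [k]" using p(1) by simp
    ultimately show ?thesis using p(1) by simp
  qed
  have sufc: "rc N (Suf @ [k]) (k # Suf)"
  proof (rule rc_sym, rule rc_commute_list[OF _ k])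
    show "\<forall>y\<in>set Suf. (y + 2 \<le> k \<or> k + 2 \<le> y) \<and> 1 \<le> y \<and> y \<le> N - 1"
    proof
      fix y assume "y \<in> set Suf"
      then obtain x where x0: "x \<in> set [Suc (Suc k)..<Suc N]" "y \<in> set (blk g x)" unfolding Suf_def by (auto simp del: upt_Suc)
      then have x: "x \<in> {Suc (Suc k)..<Suc N}" "y \<in> set (blk g x)" by auto
      then have "x \<le> y" "y < g x" using blk_letters by auto
      moreover have "g x \<le> N" using inS_bound[OF g, of x] x(1) by auto
      ultimately show "(y + 2 \<le> k \<or> k + 2 \<le> y) \<and> 1 \<le> y \<and> y \<le> N - 1" using x(1) by auto
    qed
  qed
  have nfg2: "nfw N g = Pre @ D a p @ blk g (Suc k) @ Suf"
    unfolding nfg mid[symmetric] by simp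
  have step1: "rc N (nfw N g @ [k]) (Pre @ D a p @ blk g (Suc k) @ [k] @ Suf)"
    unfolding nfg2 using rc_ctxt'[OF sufc, of "Pre @ D a p @ blk g (Suc k)"] by simp
  show ?thesis
  proof (cases "a = b")
    case True
    have gg: "g' = g"
    proof
      fix x show "g' x = g x" using g'k g'o[of x] True a_def by (cases "x = k") auto
    qed
    have e0: "blk g (Suc k) = []" using True k by (simp add: blk_def a_def b_def)
    have "rc N (D a p @ [k]) (D a p)" by (rule rc_AbsR) (use p ab True in auto)
    then have "rc N (Pre @ D a p @ [k] @ Suf) (Pre @ D a p @ Suf)"
      using rc_ctxt[of N "D a p @ [k]" "D a p" Pre Suf] by simp
    moreover have "nfw N g' = Pre @ D a p @ Suf" using gg nfg2 e0 by simp
    ultimately show ?thesis using rc_trans[OF step1[unfolded e0]] g'_def by simp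
  next
    case False
    then have altb: "a < b" using ab by auto
    have e1: "blk g (Suc k) = D b (Suc k)" using False k by (simp add: blk_def a_def b_def)
    have e2: "blk g' (Suc k) = []" using g'k g'o[of "Suc k"] k by (simp add: blk_def b_def)
    have e3: "blk g' k = D b k"
    proof (cases "k = 1")
      case True then show ?thesis using g'k by (simp add: blk_def)
    next
      case False
      then have "g (k - 1) \<le> g k" using inS_mono[OF g, of "k - 1" k] k kN by auto
      then have "g' (k - 1) \<noteq> g' k" using g'k g'o[of "k - 1"] k altb a_def by auto
      then show ?thesis using g'k by (simp add: blk_def)
    qed
    have e4: "D b (Suc k) @ [k] = D b k" using D_split[of k b] ab by simp
    have st: "rc N (nfw N g @ [k]) (Pre @ D a p @ D b k @ Suf)"
      using step1 e1 e4 by (metis append.assoc)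
    show ?thesis
    proof (cases "p = k")
      case True
      have m0: "concat (map (blk g) [p..<k]) = []" using True by simp
      have "rc N (D a k @ D b k) (D b k)"
        by (rule rc_absorb_list) (use ab k in \<open>auto simp: set_D\<close>)
      then have "rc N (Pre @ D a p @ D b k @ Suf) (Pre @ D b k @ Suf)"
        using rc_ctxt[of N "D a k @ D b k" "D b k" Pre Suf] True by simp
      moreover have "nfw N g' = Pre @ D b k @ Suf" using nfg' m0 e2 e3 by simp
      ultimately show ?thesis using rc_trans[OF st] g'_def by simp
    next
      case False
      have "concat (map (blk g) [p..<k]) = D (g p) p"
      proof (rule Lblock)
        show "\<forall>x. p < x \<and> x < k \<longrightarrow> g (x - 1) = g x"
        proof (intro allI impI)
          fix x assume "p < x \<and> x < k"
          then have "g (x - 1) = a" "g x = a" using const[of "x - 1"] const[of x] by auto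
          then show "g (x - 1) = g x" by simp
        qed
      qed (use p pstart False in auto)
      then have "nfw N g' = Pre @ D a p @ D b k @ Suf" using nfg' e2 e3 p(1) by simp
      then show ?thesis using st g'_def by simp
    qed
  qed
qed



lemma Fw_inS: "set a \<subseteq> {1..N - 1} \<Longrightarrow> inS N (Fw a)"
proof (induction a)
  case Nil then show ?case by (simp add: inS_def)
next
  case (Cons k a)
  have "inS N (fu k \<circ> Fw a)" by (rule inS_fu) (use Cons in auto)
  then show ?case unfolding Fw_Cons .
qed

lemma rc_nf: "set a \<subseteq> {1..N - 1} \<Longrightarrow> rc N a (nfw N (Fw a))"
proof (induction a rule: rev_induct)
  case Nil show ?case unfolding Fw_Nil nfw_id by (rule rc_refl)
next
  case (snoc k a)
  then have a: "set a \<subseteq> {1..N - 1}" and k: "1 \<le> k" "k \<le> N - 1" by auto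
  have "rc N (a @ [k]) (nfw N (Fw a) @ [k])" using rc_ctxt''[OF snoc.IH[OF a]] .
  moreover have "rc N (nfw N (Fw a) @ [k]) (nfw N (Fw a \<circ> fu k))"
    by (rule rc_right[OF Fw_inS[OF a] k])
  moreover have "Fw (a @ [k]) = Fw a \<circ> fu k" by simp
  ultimately show ?case using rc_trans by metis
qed

definition Inv :: "nat \<Rightarrow> (nat \<Rightarrow> nat) \<Rightarrow> (nat \<times> nat) set" where
  "Inv N w = {(i, j). 1 \<le> i \<and> i < j \<and> j \<le> N \<and> w i > w j}"

lemma len_Inv: "len N w = card (Inv N w)" by (simp add: len_def Inv_def)
lemma finite_Inv: "finite (Inv N w)"
  by (rule finite_subset[of _ "{1..N} \<times> {1..N}"]) (auto simp: Inv_def)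
lemma Inv_bound: "len N w \<le> N * N"
proof -
  have "Inv N w \<subseteq> {1..N} \<times> {1..N}" by (auto simp: Inv_def)
  then have "card (Inv N w) \<le> card ({1..N} \<times> {1..N})" by (rule card_mono[rotated]) auto
  then show ?thesis by (simp add: len_Inv)
qed

lemma perm_inj_eq: "w permutes S \<Longrightarrow> w i = w j \<Longrightarrow> i = j"
  using permutes_inj by (metis injD)

lemma swap_up:
  assumes w: "w permutes {1..N}" and k: "1 \<le> k" "k < N"
    and pq: "w p = k" "w q = Suc k" "p < q" "p \<in> {1..N}" "q \<in> {1..N}"
  shows "len N (s_gen k \<circ> w) = Suc (len N w)"
proof -
  have ip: "w i = k \<longleftrightarrow> i = p" for i using perm_inj_eq[OF w, of i p] pq by auto
  have iq: "w i = Suc k \<longleftrightarrow> i = q" for i using perm_inj_eq[OF w, of i q] pq by auto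
  have key: "transpose k (Suc k) (w i) > transpose k (Suc k) (w j) \<longleftrightarrow> (w i > w j \<or> (i = p \<and> j = q))"
    if ij: "i < j" for i j
  proof -
    consider "i = p" "j = q" | "i = p" "j \<noteq> q" | "i = q" "j \<noteq> p" | "j = p" "i \<noteq> q" | "j = q" "i \<noteq> p"
      | "i \<noteq> p" "i \<noteq> q" "j \<noteq> p" "j \<noteq> q" using ij pq(3) by force
    then show ?thesis
    proof cases
      case 1 then show ?thesis using pq by simp
    next
      case 2 then have "w j \<noteq> k" "w j \<noteq> Suc k" using ip iq that by auto
      then show ?thesis using 2 pq by (auto simp: transpose_def)
    next
      case 3 then have "w j \<noteq> k" "w j \<noteq> Suc k" using ip iq that pq by auto
      then show ?thesis using 3 pq by (auto simp: transpose_def)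
    next
      case 4 then have "w i \<noteq> k" "w i \<noteq> Suc k" using ip iq that pq by auto
      then show ?thesis using 4 pq by (auto simp: transpose_def)
    next
      case 5 then have "w i \<noteq> k" "w i \<noteq> Suc k" using ip iq that pq by auto
      then show ?thesis using 5 pq by (auto simp: transpose_def)
    next
      case 6 then have "w i \<noteq> k" "w i \<noteq> Suc k" "w j \<noteq> k" "w j \<noteq> Suc k" using ip iq by auto
      then show ?thesis using 6 by (auto simp: transpose_def)
    qed
  qed
  have "Inv N (s_gen k \<circ> w) = insert (p, q) (Inv N w)"
    using key pq unfolding Inv_def s_gen_def by auto
  moreover have "(p, q) \<notin> Inv N w" using pq by (auto simp: Inv_def)
  ultimately show ?thesis by (simp add: len_Inv finite_Inv)
qed

lemma perm_pos: "w permutes {1..N} \<Longrightarrow> y \<in> {1..N} \<Longrightarrow> \<exists>x\<in>{1..N}. w x = y"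
  by (metis permutes_def permutes_in_image)

lemma swap_len:
  assumes w: "w permutes {1..N}" and k: "1 \<le> k" "k < N"
  obtains p q where "p \<in> {1..N}" "q \<in> {1..N}" "w p = k" "w q = Suc k"
    "p < q \<Longrightarrow> len N (s_gen k \<circ> w) = Suc (len N w)"
    "q < p \<Longrightarrow> Suc (len N (s_gen k \<circ> w)) = len N w"
proof -
  obtain p where p: "p \<in> {1..N}" "w p = k" using perm_pos[OF w, of k] k by auto
  obtain q where q: "q \<in> {1..N}" "w q = Suc k" using perm_pos[OF w, of "Suc k"] k by auto
  have up: "p < q \<Longrightarrow> len N (s_gen k \<circ> w) = Suc (len N w)" using swap_up[OF w k p(2) q(2) _ p(1) q(1)] by simp
  have down: "Suc (len N (s_gen k \<circ> w)) = len N w" if "q < p"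
  proof -
    have w': "s_gen k \<circ> w permutes {1..N}"
      unfolding s_gen_def by (rule permutes_compose[OF w permutes_swap_id]) (use k in auto)
    have "len N (s_gen k \<circ> (s_gen k \<circ> w)) = Suc (len N (s_gen k \<circ> w))"
      by (rule swap_up[OF w' k _ _ that q(1) p(1)]) (use p q in \<open>auto simp: s_gen_def\<close>)
    moreover have "s_gen k \<circ> (s_gen k \<circ> w) = w" by (simp add: s_gen_def fun_eq_iff)
    ultimately show ?thesis by simp
  qed
  show ?thesis using that p q up down by blast
qed



lemma word_prod_Nil[simp]: "word_prod [] = id" by (simp add: word_prod_def)
lemma word_prod_Cons[simp]: "word_prod (k # ws) = s_gen k \<circ> word_prod ws" by (simp add: word_prod_def)

lemma len_id: "len N id = 0"
proof -
  have "Inv N id = {}" by (auto simp: Inv_def)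
  then show ?thesis by (simp add: len_Inv)
qed

lemma sgen_perm: "1 \<le> k \<Longrightarrow> k \<le> N - 1 \<Longrightarrow> w permutes {1..N} \<Longrightarrow> s_gen k \<circ> w permutes {1..N}"
  unfolding s_gen_def by (rule permutes_compose) (auto intro: permutes_swap_id)

lemma word_prod_props: "set ws \<subseteq> {1..N - 1} \<Longrightarrow> word_prod ws permutes {1..N} \<and> len N (word_prod ws) \<le> length ws"
proof (induction ws)
  case Nil show ?case unfolding word_prod_Nil list.size(3)
  proof (intro conjI)
    show "id permutes {1..N}" by (rule permutes_id)
    show "len N id \<le> 0" using len_id[of N] by (rule eq_imp_le)
  qed
next
  case (Cons k ws)
  then have ih: "word_prod ws permutes {1..N}" "len N (word_prod ws) \<le> length ws" and k: "1 \<le> k" "k \<le> N - 1" by auto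
  then have kN: "k < N" by auto
  obtain p q where pq: "p \<in> {1..N}" "q \<in> {1..N}" "word_prod ws p = k" "word_prod ws q = Suc k"
    "p < q \<Longrightarrow> len N (s_gen k \<circ> word_prod ws) = Suc (len N (word_prod ws))"
    "q < p \<Longrightarrow> Suc (len N (s_gen k \<circ> word_prod ws)) = len N (word_prod ws)"
    using swap_len[OF ih(1) k(1) kN] by metis
  have "p \<noteq> q" using pq by auto
  then have "len N (s_gen k \<circ> word_prod ws) \<le> Suc (len N (word_prod ws))" using pq(5,6) by linarith
  show ?case unfolding word_prod_Cons length_Cons
  proof (intro conjI)
    show "s_gen k \<circ> word_prod ws permutes {1..N}" by (rule sgen_perm[OF k ih(1)])
    show "len N (s_gen k \<circ> word_prod ws) \<le> Suc (length ws)" using \<open>len N (s_gen k \<circ> word_prod ws) \<le> Suc (len N (word_prod ws))\<close> ih(2) by linarith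
  qed
qed

definition P :: "nat \<Rightarrow> (nat \<Rightarrow> nat) \<Rightarrow> nat \<Rightarrow> nat" where
  "P N w x = (if 1 \<le> x \<and> x \<le> N then Max (w ` {1..x}) else x)"

lemma Max_swap:
  assumes A: "finite A" "A \<noteq> {}" and c: "Suc k \<in> A \<Longrightarrow> k \<in> A"
  shows "Max (transpose k (Suc k) ` A) = fu k (Max A)"
proof -
  let ?M = "Max A"
  have MA: "?M \<in> A" using A by simp
  have le: "y \<in> A \<Longrightarrow> y \<le> ?M" for y using A by simp
  show ?thesis
  proof (cases "?M = k")
    case True
    then have nk: "Suc k \<notin> A" using le by fastforce
    show ?thesis
    proof (rule Max_eqI)
      show "finite (transpose k (Suc k) ` A)" using A by simp
      show "fu k ?M \<in> transpose k (Suc k) ` A" using True MA by (force simp: fu_def)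
      fix y assume "y \<in> transpose k (Suc k) ` A"
      then obtain z where z: "z \<in> A" "y = transpose k (Suc k) z" by auto
      then have "z \<le> k" using le True by auto
      then show "y \<le> fu k ?M" using z True nk by (auto simp: transpose_def fu_def)
    qed
  next
    case False
    then have fM: "fu k ?M = ?M" by (simp add: fu_def)
    show ?thesis unfolding fM
    proof (rule Max_eqI)
      show "finite (transpose k (Suc k) ` A)" using A by simp
      show "?M \<in> transpose k (Suc k) ` A"
      proof (cases "?M = Suc k")
        case True then have "k \<in> A" using c MA by simp
        then show ?thesis using True by (metis image_eqI transpose_apply_first)
      next
        case F2: False
        then show ?thesis using False MA by (metis image_eqI transpose_apply_other)
      qed
      fix y assume "y \<in> transpose k (Suc k) ` A"
      then obtain z where z: "z \<in> A" "y = transpose k (Suc k) z" by auto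
      have "k \<in> A \<Longrightarrow> Suc k \<le> ?M" using le False by fastforce
      then show "y \<le> ?M" using z le[of z] le c by (auto simp: transpose_def)
    qed
  qed
qed

lemma closed_form:
  "set a \<subseteq> {1..N - 1} \<Longrightarrow> len N (word_prod a) = length a \<Longrightarrow> Fw a = P N (word_prod a)"
proof (induction a)
  case Nil
  have "P N id x = x" for x
  proof (cases "1 \<le> x \<and> x \<le> N")
    case True
    have "Max {1..x} = x" using True by (intro Max_eqI) auto
    then show ?thesis using True by (simp add: P_def)
  qed (auto simp: P_def)
  then have "P N id = id" by (simp add: fun_eq_iff)
  then show ?case by (simp only: Fw_Nil word_prod_Nil)
next
  case (Cons k a)
  define u' where "u' = word_prod a"
  have a: "set a \<subseteq> {1..N - 1}" and k: "1 \<le> k" "k \<le> N - 1" using Cons by auto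
  then have kN: "k < N" by auto
  have u': "u' permutes {1..N}" "len N u' \<le> length a" using word_prod_props[OF a] u'_def by auto
  have lu: "len N (s_gen k \<circ> u') = Suc (length a)" using Cons.prems(2) unfolding u'_def word_prod_Cons length_Cons .
  obtain p q where pq: "p \<in> {1..N}" "q \<in> {1..N}" "u' p = k" "u' q = Suc k"
    "p < q \<Longrightarrow> len N (s_gen k \<circ> u') = Suc (len N u')"
    "q < p \<Longrightarrow> Suc (len N (s_gen k \<circ> u')) = len N u'"
    using swap_len[OF u'(1) k(1) kN] by metis
  have "p \<noteq> q" using pq by auto
  have plq: "p < q"
  proof (rule ccontr)
    assume "\<not> p < q"
    then have "q < p" using \<open>p \<noteq> q\<close> by auto
    then show False using pq(6) lu u'(2) by linarith
  qed
  have "len N u' = length a" using pq(5)[OF plq] lu by simp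
  then have ih: "Fw a = P N u'" using Cons.IH[OF a] u'_def by simp
  have "P N (s_gen k \<circ> u') x = fu k (P N u' x)" for x
  proof (cases "1 \<le> x \<and> x \<le> N")
    case True
    have img: "(s_gen k \<circ> u') ` {1..x} = transpose k (Suc k) ` (u' ` {1..x})"
      by (simp add: s_gen_def image_comp)
    have c: "Suc k \<in> u' ` {1..x} \<Longrightarrow> k \<in> u' ` {1..x}"
    proof -
      assume "Suc k \<in> u' ` {1..x}"
      then obtain t where t: "t \<in> {1..x}" "u' t = Suc k" by auto
      then have "t = q" using perm_inj_eq[OF u'(1), of t q] pq by simp
      then have "p \<in> {1..x}" using t plq pq(1) by auto
      then show "k \<in> u' ` {1..x}" using pq(3) by force
    qed
    show ?thesis using True Max_swap[of "u' ` {1..x}" k, OF _ _ c] img by (simp add: P_def)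
  next
    case False
    then show ?thesis using k by (auto simp: P_def fu_def)
  qed
  then have pe: "P N (s_gen k \<circ> u') = fu k \<circ> P N u'" by (intro ext) (simp only: o_apply)
  show ?case unfolding Fw_Cons word_prod_Cons u'_def[symmetric] ih pe by (rule HOL.refl)
qed

lemma mono_id:
  assumes inc: "\<And>x. 1 \<le> x \<Longrightarrow> x < N \<Longrightarrow> h x < h (Suc x)"
    and rng: "\<And>x. 1 \<le> x \<Longrightarrow> x \<le> N \<Longrightarrow> 1 \<le> h x \<and> h x \<le> N"
  shows "1 \<le> x \<Longrightarrow> x \<le> N \<Longrightarrow> h x = x"
proof -
  have lo: "1 \<le> x \<Longrightarrow> x \<le> N \<Longrightarrow> x \<le> h x" for x
  proof (induction x)
    case 0 then show ?case by simp
  next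
    case (Suc x)
    show ?case
    proof (cases "x = 0")
      case True then show ?thesis using rng[of 1] Suc by auto
    next
      case False
      then have "x \<le> h x" using Suc by auto
      moreover have "h x < h (Suc x)" using inc[of x] Suc False by auto
      ultimately show ?thesis by simp
    qed
  qed
  have hi: "\<forall>x. 1 \<le> x \<and> x \<le> N \<and> N - x = d \<longrightarrow> h x \<le> x" for d
  proof (induction d)
    case 0 then show ?case using rng by auto
  next
    case (Suc d)
    show ?case
    proof (intro allI impI)
      fix x assume x: "1 \<le> x \<and> x \<le> N \<and> N - x = Suc d"
      then have "Suc x \<le> N" "N - Suc x = d" by auto
      then have "h (Suc x) \<le> Suc x" using Suc.IH by auto
      moreover have "h x < h (Suc x)" using inc[of x] x by auto
      ultimately show "h x \<le> x" by simp
    qed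
  qed
  assume "1 \<le> x" "x \<le> N"
  then show "h x = x" using lo[of x] hi[of "N - x"] by auto
qed

lemma reduced_exists:
  "w permutes {1..N} \<Longrightarrow> \<exists>a. reduced_word N w a"
proof (induction "len N w" arbitrary: w rule: less_induct)
  case less
  show ?case
  proof (cases "w = id")
    case True
    then show ?thesis using len_id[of N] by (intro exI[of _ "[]"]) (simp add: reduced_word_def)
  next
    case False
    let ?h = "inv w"
    have hperm: "?h permutes {1..N}" using permutes_inv[OF less.prems] .
    have "\<exists>k. 1 \<le> k \<and> k < N \<and> ?h (Suc k) < ?h k"
    proof (rule ccontr)
      assume nc: "\<not> ?thesis"
      have inc: "?h x < ?h (Suc x)" if "1 \<le> x" "x < N" for x
      proof -
        have "\<not> ?h (Suc x) < ?h x" using nc that by blast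
        moreover have "?h x \<noteq> ?h (Suc x)" using perm_inj_eq[OF hperm, of x "Suc x"] by auto
        ultimately show ?thesis by linarith
      qed
      have rng: "\<And>x. 1 \<le> x \<Longrightarrow> x \<le> N \<Longrightarrow> 1 \<le> ?h x \<and> ?h x \<le> N"
        using permutes_in_image[OF hperm] by auto
      have "w x = x" for x
      proof (cases "1 \<le> x \<and> x \<le> N")
        case True
        then have "?h x = x" using mono_id[where h="inv w" and N=N, OF inc rng] by auto
        then show ?thesis using permutes_inverses(1)[OF less.prems, of x] by simp
      next
        case False then show ?thesis using permutes_not_in[OF less.prems] by auto
      qed
      then show False using \<open>w \<noteq> id\<close> by (auto simp: fun_eq_iff)
    qed
    then obtain k where k: "1 \<le> k" "k < N" "?h (Suc k) < ?h k" by auto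
    have kk: "k \<le> N - 1" using k by auto
    obtain p q where pq: "p \<in> {1..N}" "q \<in> {1..N}" "w p = k" "w q = Suc k"
      "q < p \<Longrightarrow> Suc (len N (s_gen k \<circ> w)) = len N w"
      using swap_len[OF less.prems k(1) k(2)] by metis
    have "p = ?h k" "q = ?h (Suc k)" using pq permutes_inverses(2)[OF less.prems] by metis+
    then have qp: "q < p" using k by simp
    have w': "s_gen k \<circ> w permutes {1..N}" using sgen_perm[OF k(1) kk less.prems] .
    obtain a where a: "reduced_word N (s_gen k \<circ> w) a"
      using less.hyps[OF _ w'] pq(5)[OF qp] by auto
    have "reduced_word N w (k # a)"
      using a k pq(5)[OF qp] unfolding reduced_word_def
      by (auto simp: s_gen_def fun_eq_iff)
    then show ?thesis by blast
  qed
qed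



abbreviation cw :: "nat \<Rightarrow> (nat \<Rightarrow> nat) \<Rightarrow> nat list" where
  "cw N w \<equiv> Psi_word N (nfw N (P N w))"

lemma reduced_facts:
  assumes "reduced_word N w a"
  shows "mcong N (Psi_word N a) (cw N w)" "H N (Psi_word N a) = P N w"
proof -
  have a: "set a \<subseteq> {1..N - 1}" "word_prod a = w" "length a = len N w"
    using assms by (auto simp: reduced_word_def)
  have "Fw a = P N w" using closed_form[OF a(1)] a by simp
  then show "mcong N (Psi_word N a) (cw N w)" using rc_nf[OF a(1)] by (simp add: rc_def)
  have "set a \<subseteq> {..N}" using a(1) by (auto simp: subset_iff)
  then show "H N (Psi_word N a) = P N w" using H_Psi \<open>Fw a = P N w\<close> by simp
qed

lemma phiPsi_char:
  assumes "w permutes {1..N}"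
  shows "phiPsi N w = {b. mcong N (cw N w) b}"
proof -
  obtain a0 where a0: "reduced_word N w a0" using reduced_exists[OF assms] by blast
  show ?thesis
  proof (intro set_eqI iffI)
    fix b assume "b \<in> phiPsi N w"
    then obtain a where "reduced_word N w a" "mcong N (Psi_word N a) b" by (auto simp: phiPsi_def)
    then show "b \<in> {b. mcong N (cw N w) b}"
      using reduced_facts(1) mcong.sym mcong.trans by blast
  next
    fix b assume "b \<in> {b. mcong N (cw N w) b}"
    then have "mcong N (Psi_word N a0) b" using reduced_facts(1)[OF a0] mcong.trans by blast
    then show "b \<in> phiPsi N w" using a0 by (auto simp: phiPsi_def)
  qed
qed

lemma H_cw: "w permutes {1..N} \<Longrightarrow> H N (cw N w) = P N w"
proof -
  assume w: "w permutes {1..N}"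
  obtain a0 where a0: "reduced_word N w a0" using reduced_exists[OF w] by blast
  show ?thesis using mcong_H[OF reduced_facts(1)[OF a0]] reduced_facts(2)[OF a0] by simp
qed

lemma G_char:
  assumes "w0 \<in> G N m"
  shows "G N m = {u. u permutes {1..N} \<and> P N u = P N w0}"
proof -
  have w0: "w0 permutes {1..N}" "m = phiPsi N w0" using assms by (auto simp: G_def)
  show ?thesis
  proof (intro set_eqI iffI)
    fix u assume "u \<in> G N m"
    then have u: "u permutes {1..N}" "phiPsi N u = phiPsi N w0" using w0 by (auto simp: G_def)
    have "cw N u \<in> phiPsi N u" using phiPsi_char[OF u(1)] mcong.refl by blast
    then have "mcong N (cw N w0) (cw N u)" using u(2) phiPsi_char[OF w0(1)] by blast
    then have "P N u = P N w0" using mcong_H H_cw u(1) w0(1) by metis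
    then show "u \<in> {u. u permutes {1..N} \<and> P N u = P N w0}" using u by simp
  next
    fix u assume "u \<in> {u. u permutes {1..N} \<and> P N u = P N w0}"
    then have u: "u permutes {1..N}" "P N u = P N w0" by auto
    then have "phiPsi N u = phiPsi N w0" using phiPsi_char[OF u(1)] phiPsi_char[OF w0(1)] by simp
    then show "u \<in> G N m" using u w0 by (simp add: G_def)
  qed
qed



definition c321 :: "nat \<Rightarrow> (nat \<Rightarrow> nat) \<Rightarrow> bool" where
  "c321 N w \<longleftrightarrow> (\<exists>i j k. 1 \<le> i \<and> i < j \<and> j < k \<and> k \<le> N \<and> w k < w j \<and> w j < w i)"
definition c312 :: "nat \<Rightarrow> (nat \<Rightarrow> nat) \<Rightarrow> bool" where
  "c312 N w \<longleftrightarrow> (\<exists>i j k. 1 \<le> i \<and> i < j \<and> j < k \<and> k \<le> N \<and> w j < w k \<and> w k < w i)"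

lemma less3: "a < (3::nat) \<Longrightarrow> a = 0 \<or> a = 1 \<or> a = 2" by auto

lemma contains_pattern3:
  "contains_pattern N w [a0, a1, a2] \<longleftrightarrow> (\<exists>i j k. 1 \<le> i \<and> i < j \<and> j < k \<and> k \<le> N \<and>
     (\<forall>a < 3. \<forall>b < 3. w ([i, j, k] ! a) < w ([i, j, k] ! b) \<longleftrightarrow> [a0, a1, a2] ! a < [a0, a1, a2] ! b))"
proof
  assume "contains_pattern N w [a0, a1, a2]"
  then obtain idx where idx0: "length idx = length [a0, a1, a2]" "sorted_wrt (<) idx" "set idx \<subseteq> {1..N}"
    "\<forall>a < length [a0, a1, a2]. \<forall>b < length [a0, a1, a2]. w (idx ! a) < w (idx ! b) \<longleftrightarrow> [a0, a1, a2] ! a < [a0, a1, a2] ! b"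
    unfolding contains_pattern_def by blast
  have l3: "length [a0, a1, a2] = 3" by simp
  note idx = idx0[unfolded l3]
  then obtain i j k where e: "idx = [i, j, k]" by (auto simp: numeral_3_eq_3 length_Suc_conv)
  show "\<exists>i j k. 1 \<le> i \<and> i < j \<and> j < k \<and> k \<le> N \<and>
     (\<forall>a < 3. \<forall>b < 3. w ([i, j, k] ! a) < w ([i, j, k] ! b) \<longleftrightarrow> [a0, a1, a2] ! a < [a0, a1, a2] ! b)"
    using idx unfolding e by (intro exI[of _ i] exI[of _ j] exI[of _ k]) auto
next
  assume "\<exists>i j k. 1 \<le> i \<and> i < j \<and> j < k \<and> k \<le> N \<and>
     (\<forall>a < 3. \<forall>b < 3. w ([i, j, k] ! a) < w ([i, j, k] ! b) \<longleftrightarrow> [a0, a1, a2] ! a < [a0, a1, a2] ! b)"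
  then obtain i j k where h: "1 \<le> i" "i < j" "j < k" "k \<le> N"
     "\<forall>a < 3. \<forall>b < 3. w ([i, j, k] ! a) < w ([i, j, k] ! b) \<longleftrightarrow> [a0, a1, a2] ! a < [a0, a1, a2] ! b"
    by blast
  show "contains_pattern N w [a0, a1, a2]" unfolding contains_pattern_def
    by (rule exI[of _ "[i, j, k]"]) (use h in auto)
qed

lemma c321_iff: "contains_pattern N w [3, 2, 1] \<longleftrightarrow> c321 N w"
  unfolding contains_pattern3 c321_def
proof (intro iffI; elim exE conjE)
  fix i j k assume h: "1 \<le> i" "i < j" "j < k" "k \<le> N"
    "\<forall>a<3. \<forall>b<3. (w ([i, j, k] ! a) < w ([i, j, k] ! b)) = ([3::nat, 2, 1] ! a < [3, 2, 1] ! b)"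
  have "w k < w j" using h(5)[rule_format, of 2 1] by simp
  moreover have "w j < w i" using h(5)[rule_format, of 1 0] by simp
  ultimately show "\<exists>i j k. 1 \<le> i \<and> i < j \<and> j < k \<and> k \<le> N \<and> w k < w j \<and> w j < w i" using h by blast
next
  fix i j k assume h: "1 \<le> i" "i < j" "j < k" "k \<le> N" "w k < w j" "w j < w i"
  have "\<forall>a<3. \<forall>b<3. (w ([i, j, k] ! a) < w ([i, j, k] ! b)) = ([3::nat, 2, 1] ! a < [3, 2, 1] ! b)"
  proof (intro allI impI)
    fix a b :: nat assume "a < 3" "b < 3"
    then show "(w ([i, j, k] ! a) < w ([i, j, k] ! b)) = ([3::nat, 2, 1] ! a < [3, 2, 1] ! b)"
      using less3[of a] less3[of b] h(5,6) by auto
  qed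
  then show "\<exists>i j k. 1 \<le> i \<and> i < j \<and> j < k \<and> k \<le> N \<and>
     (\<forall>a<3. \<forall>b<3. (w ([i, j, k] ! a) < w ([i, j, k] ! b)) = ([3::nat, 2, 1] ! a < [3, 2, 1] ! b))"
    using h by blast
qed

lemma c312_iff: "contains_pattern N w [3, 1, 2] \<longleftrightarrow> c312 N w"
  unfolding contains_pattern3 c312_def
proof (intro iffI; elim exE conjE)
  fix i j k assume h: "1 \<le> i" "i < j" "j < k" "k \<le> N"
    "\<forall>a<3. \<forall>b<3. (w ([i, j, k] ! a) < w ([i, j, k] ! b)) = ([3::nat, 1, 2] ! a < [3, 1, 2] ! b)"
  have "w j < w k" using h(5)[rule_format, of 1 2] by simp
  moreover have "w k < w i" using h(5)[rule_format, of 2 0] by simp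
  ultimately show "\<exists>i j k. 1 \<le> i \<and> i < j \<and> j < k \<and> k \<le> N \<and> w j < w k \<and> w k < w i" using h by blast
next
  fix i j k assume h: "1 \<le> i" "i < j" "j < k" "k \<le> N" "w j < w k" "w k < w i"
  have "\<forall>a<3. \<forall>b<3. (w ([i, j, k] ! a) < w ([i, j, k] ! b)) = ([3::nat, 1, 2] ! a < [3, 1, 2] ! b)"
  proof (intro allI impI)
    fix a b :: nat assume "a < 3" "b < 3"
    then show "(w ([i, j, k] ! a) < w ([i, j, k] ! b)) = ([3::nat, 1, 2] ! a < [3, 1, 2] ! b)"
      using less3[of a] less3[of b] h(5,6) by auto
  qed
  then show "\<exists>i j k. 1 \<le> i \<and> i < j \<and> j < k \<and> k \<le> N \<and>
     (\<forall>a<3. \<forall>b<3. (w ([i, j, k] ! a) < w ([i, j, k] ! b)) = ([3::nat, 1, 2] ! a < [3, 1, 2] ! b))"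
    using h by blast
qed



lemma Max_dom:
  assumes "finite A" "finite B" "A \<noteq> {}" "\<forall>a\<in>A. \<exists>b\<in>B. a \<le> b"
  shows "Max A \<le> (Max B :: nat)"
proof -
  obtain b where "b \<in> B" "Max A \<le> b" using assms Max_in[of A] by blast
  then show ?thesis using assms(2) by (meson Max_ge le_trans)
qed

lemma P_swap_le:
  fixes v :: "nat \<Rightarrow> nat"
  assumes "1 \<le> i" "i < j" "j < k" "v i > v j" "v i > v k" "1 \<le> x" "x \<le> N"
  shows "Max ((v \<circ> transpose j k) ` {1..x}) \<le> Max (v ` {1..x})"
proof (rule Max_dom)
  show "\<forall>a\<in>(v \<circ> transpose j k) ` {1..x}. \<exists>b\<in>v ` {1..x}. a \<le> b"
  proof
    fix a assume "a \<in> (v \<circ> transpose j k) ` {1..x}"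
    then obtain s where s: "s \<in> {1..x}" "a = v (transpose j k s)" by auto
    show "\<exists>b\<in>v ` {1..x}. a \<le> b"
    proof (cases "s = j")
      case True
      show ?thesis
      proof (cases "k \<le> x")
        case True then show ?thesis using s \<open>s = j\<close> assms by force
      next
        case False
        have "i \<in> {1..x}" using s \<open>s = j\<close> assms by auto
        then show ?thesis using s \<open>s = j\<close> assms by (intro bexI[of _ "v i"]) auto
      qed
    next
      case False
      show ?thesis
      proof (cases "s = k")
        case True
        then have "j \<in> {1..x}" using s assms by auto
        then show ?thesis using s True by (intro bexI[of _ "v j"]) auto
      next
        case False
        then show ?thesis using s \<open>s \<noteq> j\<close> by (intro bexI[of _ "v s"]) auto
      qed
    qed
  qed
qed (use assms in auto)

lemma P_swap:
  assumes "1 \<le> i" "i < j" "j < k" "v i > v j" "v i > v k"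
  shows "P N (v \<circ> transpose j k) = P N v"
proof
  fix x
  show "P N (v \<circ> transpose j k) x = P N v x"
  proof (cases "1 \<le> x \<and> x \<le> N")
    case True
    have 1: "Max ((v \<circ> transpose j k) ` {1..x}) \<le> Max (v ` {1..x})"
      using P_swap_le[OF assms] True by auto
    have e: "(v \<circ> transpose j k) \<circ> transpose j k = v" by (simp add: fun_eq_iff)
    have 2: "Max (((v \<circ> transpose j k) \<circ> transpose j k) ` {1..x}) \<le> Max ((v \<circ> transpose j k) ` {1..x})"
      by (rule P_swap_le[of i j k]) (use assms True in auto)
    have "Max ((v \<circ> transpose j k) ` {1..x}) = Max (v ` {1..x})" using 1 2 unfolding e by (rule antisym)
    then show ?thesis using True unfolding P_def by simp
  next
    case False
    then show ?thesis unfolding P_def by (simp only: False if_False)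
  qed
qed

definition mid :: "nat \<Rightarrow> nat \<Rightarrow> nat \<times> nat \<Rightarrow> bool" where
  "mid j k pq \<longleftrightarrow> (fst pq = j \<and> j < snd pq \<and> snd pq < k) \<or> (snd pq = k \<and> j < fst pq \<and> fst pq < k)"

definition sig :: "nat \<Rightarrow> nat \<Rightarrow> nat \<times> nat \<Rightarrow> nat \<times> nat" where
  "sig j k pq = (if mid j k pq then pq else (transpose j k (fst pq), transpose j k (snd pq)))"

lemma sig_facts:
  assumes "j < k" "p < q" "(p, q) \<noteq> (j, k)" "\<not> mid j k (p, q)"
  shows "transpose j k p < transpose j k q" "\<not> mid j k (transpose j k p, transpose j k q)"
    "(transpose j k p, transpose j k q) \<noteq> (j, k)"
  using assms by (auto simp: mid_def transpose_def)

lemma sig_invol: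
  assumes "j < k" "p < q" "(p, q) \<noteq> (j, k)"
  shows "sig j k (sig j k (p, q)) = (p, q)"
  using sig_facts[OF assms] by (cases "mid j k (p, q)") (auto simp: sig_def)

lemma swap_len2:
  assumes v: "v permutes {1..N}" and jk: "1 \<le> j" "j < k" "k \<le> N" "v k < v j"
    and gap: "\<And>x. j < x \<Longrightarrow> x < k \<Longrightarrow> \<not> (v k < v x \<and> v x < v j)"
  shows "Suc (len N (v \<circ> transpose j k)) = len N v"
proof -
  let ?t = "transpose j k"
  let ?v = "v \<circ> ?t"
  have inj: "v a = v b \<Longrightarrow> a = b" for a b using perm_inj_eq[OF v] .
  have fw: "sig j k pq \<in> Inv N ?v" if "pq \<in> Inv N v - {(j, k)}" for pq
  proof -
    obtain p q where pq: "pq = (p, q)" by (cases pq)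
    have h: "1 \<le> p" "p < q" "q \<le> N" "v p > v q" "(p, q) \<noteq> (j, k)" using that pq by (auto simp: Inv_def)
    show ?thesis
    proof (cases "mid j k (p, q)")
      case True
      then consider "p = j" "j < q" "q < k" | "q = k" "j < p" "p < k" by (auto simp: mid_def)
      then show ?thesis
      proof cases
        case 1
        then have "v q \<noteq> v k" using inj by blast
        then have "v q < v k" using gap[of q] 1 h by auto
        then show ?thesis using True 1 h pq by (auto simp: sig_def Inv_def)
      next
        case 2
        then have "v p \<noteq> v j" using inj by blast
        then have "v p > v j" using gap[of p] 2 h by auto
        then show ?thesis using True 2 h pq jk by (auto simp: sig_def Inv_def)
      qed
    next
      case False
      have f: "?t p < ?t q" using sig_facts[OF jk(2) h(2) h(5) False] by simp
      have r: "1 \<le> ?t p" "?t q \<le> N" using h jk by (auto simp: transpose_def)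
      show ?thesis using False f r h pq by (auto simp: sig_def Inv_def)
    qed
  qed
  have bw: "sig j k rs \<in> Inv N v - {(j, k)}" if "rs \<in> Inv N ?v" for rs
  proof -
    obtain r s where rs: "rs = (r, s)" by (cases rs)
    have h: "1 \<le> r" "r < s" "s \<le> N" "?v r > ?v s" using that rs by (auto simp: Inv_def)
    have ne: "(r, s) \<noteq> (j, k)" using h jk by auto
    show ?thesis
    proof (cases "mid j k (r, s)")
      case True
      then consider "r = j" "j < s" "s < k" | "s = k" "j < r" "r < k" by (auto simp: mid_def)
      then show ?thesis
      proof cases
        case 1
        then have "v s < v j" using h jk by auto
        then show ?thesis using True 1 h rs by (auto simp: sig_def Inv_def)
      next
        case 2
        then have "v r > v k" using h jk by auto
        then show ?thesis using True 2 h rs jk by (auto simp: sig_def Inv_def)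
      qed
    next
      case False
      have f: "?t r < ?t s" "(?t r, ?t s) \<noteq> (j, k)" using sig_facts[OF jk(2) h(2) ne False] by simp_all
      have r: "1 \<le> ?t r" "?t s \<le> N" using h jk by (auto simp: transpose_def)
      show ?thesis using False f r h rs by (auto simp: sig_def Inv_def)
    qed
  qed
  have ord: "pq \<in> Inv N v - {(j, k)} \<Longrightarrow> fst pq < snd pq \<and> pq \<noteq> (j, k)" for pq by (auto simp: Inv_def)
  have ord': "rs \<in> Inv N ?v \<Longrightarrow> fst rs < snd rs \<and> rs \<noteq> (j, k)" for rs using jk by (auto simp: Inv_def)
  have invo: "sig j k (sig j k pq) = pq" if "fst pq < snd pq" "pq \<noteq> (j, k)" for pq
    using sig_invol[OF jk(2), of "fst pq" "snd pq"] that by (cases pq) auto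
  have eq: "Inv N ?v = sig j k ` (Inv N v - {(j, k)})"
  proof (intro set_eqI iffI)
    fix rs assume a: "rs \<in> Inv N ?v"
    then have "rs = sig j k (sig j k rs)" using invo ord' by simp
    then show "rs \<in> sig j k ` (Inv N v - {(j, k)})" using bw[OF a] by blast
  next
    fix rs assume "rs \<in> sig j k ` (Inv N v - {(j, k)})"
    then show "rs \<in> Inv N ?v" using fw by blast
  qed
  have injs: "inj_on (sig j k) (Inv N v - {(j, k)})"
    by (rule inj_on_inverseI[of _ "sig j k"]) (use invo ord in auto)
  have jkin: "(j, k) \<in> Inv N v" using jk by (auto simp: Inv_def)
  have "card (Inv N ?v) = card (Inv N v - {(j, k)})" unfolding eq by (rule card_image[OF injs])
  also have "\<dots> = card (Inv N v) - 1" using jkin finite_Inv by (simp add: card_Diff_singleton)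
  finally have "card (Inv N ?v) = card (Inv N v) - 1" .
  moreover have "card (Inv N v) > 0" using jkin finite_Inv[of N v] by (auto simp: card_gt_0_iff)
  ultimately show ?thesis by (simp add: len_Inv)
qed

lemma nr_lemma:
  assumes u: "u permutes {1..N}" and v: "v permutes {1..N}" and PP: "P N u = P N v"
    and x: "1 \<le> x" "x \<le> N" and agr: "\<And>t. 1 \<le> t \<Longrightarrow> t < x \<Longrightarrow> u t = v t"
    and lt: "u x < v x"
  shows "\<exists>i. 1 \<le> i \<and> i < x \<and> v i > v x"
proof (rule ccontr)
  assume "\<not> ?thesis"
  then have le: "\<And>i. 1 \<le> i \<Longrightarrow> i < x \<Longrightarrow> v i \<le> v x" by (meson not_le)
  have "Max (v ` {1..x}) = v x"
  proof (rule Max_eqI)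
    fix y assume "y \<in> v ` {1..x}"
    then obtain i where "i \<in> {1..x}" "y = v i" by auto
    then show "y \<le> v x" using le[of i] by (cases "i = x") auto
  qed (use x in auto)
  then have "Max (u ` {1..x}) = v x" using PP x unfolding P_def by (metis (no_types, lifting) fun_eq_iff)
  moreover have "Max (u ` {1..x}) \<in> u ` {1..x}" using x by (intro Max_in) auto
  ultimately obtain t where t: "t \<in> {1..x}" "u t = v x" by (metis imageE)
  show False
  proof (cases "t = x")
    case True then show False using t lt by simp
  next
    case False
    then have "v t = v x" using t agr by auto
    then show False using perm_inj_eq[OF v] False by blast
  qed
qed

lemma diff_lemma:
  assumes u: "u permutes {1..N}" and v: "v permutes {1..N}" and PP: "P N u = P N v"
    and x: "1 \<le> x" "x \<le> N" and agr: "\<And>t. 1 \<le> t \<Longrightarrow> t < x \<Longrightarrow> u t = v t"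
    and lt: "u x < v x"
  shows "c321 N v \<and> c312 N u"
proof -
  obtain i where i: "1 \<le> i" "i < x" "v i > v x" using nr_lemma[OF assms] by blast
  have ux: "u x \<in> {1..N}" "v x \<in> {1..N}" using x permutes_in_image[OF u] permutes_in_image[OF v] by auto
  obtain y where y: "y \<in> {1..N}" "v y = u x" using perm_pos[OF v ux(1)] by blast
  obtain z where z: "z \<in> {1..N}" "u z = v x" using perm_pos[OF u ux(2)] by blast
  have "x < y"
  proof (rule ccontr)
    assume "\<not> x < y"
    moreover have "y \<noteq> x" using y lt by auto
    ultimately have "y < x" by simp
    then have "u y = u x" using agr[of y] y by auto
    then show False using perm_inj_eq[OF u] \<open>y \<noteq> x\<close> by blast
  qed
  have "x < z"
  proof (rule ccontr)
    assume "\<not> x < z"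
    moreover have "z \<noteq> x" using z lt by auto
    ultimately have "z < x" by simp
    then have "v z = v x" using agr[of z] z by auto
    then show False using perm_inj_eq[OF v] \<open>z \<noteq> x\<close> by blast
  qed
  have "c321 N v" unfolding c321_def
    using i y \<open>x < y\<close> lt by (intro exI[of _ i] exI[of _ x] exI[of _ y]) auto
  moreover have "u i = v i" using agr i by auto
  then have "c312 N u" unfolding c312_def
    using i z \<open>x < z\<close> lt by (intro exI[of _ i] exI[of _ x] exI[of _ z]) auto
  ultimately show ?thesis by simp
qed

lemma uniq_lemma:
  assumes u: "u permutes {1..N}" and v: "v permutes {1..N}" and PP: "P N u = P N v" and ne: "u \<noteq> v"
  shows "(c321 N u \<or> c321 N v) \<and> (c312 N u \<or> c312 N v)"
proof -
  obtain x0 where "u x0 \<noteq> v x0" using ne by auto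
  then have "x0 \<in> {1..N}" using permutes_not_in[OF u] permutes_not_in[OF v] by metis
  then obtain x where x: "1 \<le> x \<and> x \<le> N \<and> u x \<noteq> v x"
    "\<forall>y. 1 \<le> y \<and> y \<le> N \<and> u y \<noteq> v y \<longrightarrow> x \<le> y"
    using ex_has_least_nat[of "\<lambda>y. 1 \<le> y \<and> y \<le> N \<and> u y \<noteq> v y" x0 id] \<open>u x0 \<noteq> v x0\<close> by auto
  have agr: "\<And>t. 1 \<le> t \<Longrightarrow> t < x \<Longrightarrow> u t = v t" using x by force
  have agr': "\<And>t. 1 \<le> t \<Longrightarrow> t < x \<Longrightarrow> v t = u t" using agr by metis
  show ?thesis
  proof (cases "u x < v x")
    case True then show ?thesis using diff_lemma[OF u v PP _ _ agr] x by auto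
  next
    case False
    then have "v x < u x" using x by auto
    then show ?thesis using diff_lemma[OF v u PP[symmetric] _ _ agr'] x by auto
  qed
qed

lemma E1:
  assumes v: "v permutes {1..N}" and c: "c321 N v"
  shows "\<exists>v'. v' permutes {1..N} \<and> P N v' = P N v \<and> len N v' < len N v"
proof -
  define C where "C = (\<lambda>pr. 1 \<le> fst pr \<and> fst pr < snd pr \<and> snd pr \<le> N \<and> v (snd pr) < v (fst pr) \<and>
     (\<exists>i. 1 \<le> i \<and> i < fst pr \<and> v (fst pr) < v i))"
  obtain i0 j0 k0 where "1 \<le> i0" "i0 < j0" "j0 < k0" "k0 \<le> N" "v k0 < v j0" "v j0 < v i0"
    using c unfolding c321_def by blast
  then have "C (j0, k0)" unfolding C_def by auto
  then obtain pr where pr: "C pr" "\<forall>y. C y \<longrightarrow> snd pr - fst pr \<le> snd y - fst y"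
    using ex_has_least_nat[of C "(j0, k0)" "\<lambda>pr. snd pr - fst pr"] by blast
  obtain j k where jk: "pr = (j, k)" by (cases pr)
  obtain i where h: "1 \<le> j" "j < k" "k \<le> N" "v k < v j" "1 \<le> i" "i < j" "v j < v i"
    using pr(1) unfolding C_def jk by auto
  have gap: "\<not> (v k < v x \<and> v x < v j)" if "j < x" "x < k" for x
  proof
    assume a: "v k < v x \<and> v x < v j"
    then have "C (j, x)" unfolding C_def using h that by auto
    then have "k - j \<le> x - j" using pr(2) jk by fastforce
    then show False using that by simp
  qed
  define v' where "v' = v \<circ> transpose j k"
  have "v' permutes {1..N}" unfolding v'_def
    by (rule permutes_compose[OF permutes_swap_id v]) (use h in auto)
  moreover have "P N v' = P N v" unfolding v'_def by (rule P_swap[of i]) (use h in auto)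
  moreover have "Suc (len N v') = len N v" unfolding v'_def by (rule swap_len2[OF v]) (use h gap in auto)
  ultimately show ?thesis by (intro exI[of _ v']) auto
qed

lemma E2:
  assumes v: "v permutes {1..N}" and c: "c312 N v"
  shows "\<exists>v'. v' permutes {1..N} \<and> P N v' = P N v \<and> len N v < len N v'"
proof -
  define C where "C = (\<lambda>pr. 1 \<le> fst pr \<and> fst pr < snd pr \<and> snd pr \<le> N \<and> v (fst pr) < v (snd pr) \<and>
     (\<exists>i. 1 \<le> i \<and> i < fst pr \<and> v (snd pr) < v i))"
  obtain i0 j0 k0 where "1 \<le> i0" "i0 < j0" "j0 < k0" "k0 \<le> N" "v j0 < v k0" "v k0 < v i0"
    using c unfolding c312_def by blast
  then have "C (j0, k0)" unfolding C_def by auto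
  then obtain pr where pr: "C pr" "\<forall>y. C y \<longrightarrow> snd pr - fst pr \<le> snd y - fst y"
    using ex_has_least_nat[of C "(j0, k0)" "\<lambda>pr. snd pr - fst pr"] by blast
  obtain j k where jk: "pr = (j, k)" by (cases pr)
  obtain i where h: "1 \<le> j" "j < k" "k \<le> N" "v j < v k" "1 \<le> i" "i < j" "v k < v i"
    using pr(1) unfolding C_def jk by auto
  have gap: "\<not> (v j < v x \<and> v x < v k)" if "j < x" "x < k" for x
  proof
    assume a: "v j < v x \<and> v x < v k"
    then have "C (j, x)" unfolding C_def using h that by auto
    then have "k - j \<le> x - j" using pr(2) jk by fastforce
    then show False using that by simp
  qed
  define v' where "v' = v \<circ> transpose j k"
  have v'p: "v' permutes {1..N}" unfolding v'_def
    by (rule permutes_compose[OF permutes_swap_id v]) (use h in auto)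
  moreover have "P N v' = P N v" unfolding v'_def by (rule P_swap[of i]) (use h in auto)
  moreover have "Suc (len N (v' \<circ> transpose j k)) = len N v'"
  proof (rule swap_len2[OF v'p])
    show "v' k < v' j" using h by (simp add: v'_def)
    fix x assume "j < x" "x < k"
    then show "\<not> (v' k < v' x \<and> v' x < v' j)" using gap[of x] h by (simp add: v'_def)
  qed (use h in auto)
  moreover have "v' \<circ> transpose j k = v" by (simp add: v'_def fun_eq_iff)
  ultimately show ?thesis by (intro exI[of _ v']) auto
qed

theorem mainTheorem2:
  fixes N :: nat and m :: "nat list set"
  assumes "N \<ge> 1" and "G N m \<noteq> {}"
  shows "(\<exists>!u. u \<in> G N m \<and> avoids N u [3,2,1])
       \<and> (\<forall>u \<in> G N m. avoids N u [3,2,1] \<longrightarrow> (\<forall>v \<in> G N m. len N u \<le> len N v))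
       \<and> (\<exists>!u. u \<in> G N m \<and> avoids N u [3,1,2])
       \<and> (\<forall>u \<in> G N m. avoids N u [3,1,2] \<longrightarrow> (\<forall>v \<in> G N m. len N v \<le> len N u))"
proof -
  obtain w0 where w0: "w0 \<in> G N m" using assms(2) by blast
  note Gc = G_char[OF w0]
  have memG: "u \<in> G N m \<longleftrightarrow> u permutes {1..N} \<and> P N u = P N w0" for u using Gc by auto
  have av1: "avoids N u [3,2,1] \<longleftrightarrow> \<not> c321 N u" for u unfolding avoids_def c321_iff ..
  have av2: "avoids N u [3,1,2] \<longleftrightarrow> \<not> c312 N u" for u unfolding avoids_def c312_iff ..
  obtain u0 where u0: "u0 \<in> G N m" "\<forall>v. v \<in> G N m \<longrightarrow> len N u0 \<le> len N v"
    using ex_has_least_nat[of "\<lambda>u. u \<in> G N m" w0 "len N"] w0 by blast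
  have u0a: "\<not> c321 N u0"
  proof
    assume "c321 N u0"
    then obtain v' where "v' permutes {1..N}" "P N v' = P N u0" "len N v' < len N u0"
      using E1 u0(1) memG by blast
    then show False using u0 memG by fastforce
  qed
  have un1: "u = u0" if "u \<in> G N m" "\<not> c321 N u" for u
    using uniq_lemma[of u N u0] that u0a u0(1) memG by auto
  obtain u1 where u1: "u1 \<in> G N m" "\<forall>v. v \<in> G N m \<longrightarrow> len N v \<le> len N u1"
    using Lattices_Big.ex_has_greatest_nat[of "\<lambda>u. u \<in> G N m" w0 "len N" "N * N + 1"] w0 Inv_bound
    by (metis less_Suc_eq_le Suc_eq_plus1)
  have u1a: "\<not> c312 N u1"
  proof
    assume "c312 N u1"
    then obtain v' where "v' permutes {1..N}" "P N v' = P N u1" "len N u1 < len N v'"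
      using E2 u1(1) memG by blast
    then show False using u1 memG by fastforce
  qed
  have un2: "u = u1" if "u \<in> G N m" "\<not> c312 N u" for u
    using uniq_lemma[of u N u1] that u1a u1(1) memG by auto
  show ?thesis unfolding av1 av2
  proof (intro conjI)
    show "\<exists>!u. u \<in> G N m \<and> \<not> c321 N u" using u0(1) u0a un1 by blast
    show "\<forall>u\<in>G N m. \<not> c321 N u \<longrightarrow> (\<forall>v\<in>G N m. len N u \<le> len N v)" using un1 u0 by blast
    show "\<exists>!u. u \<in> G N m \<and> \<not> c312 N u" using u1(1) u1a un2 by blast
    show "\<forall>u\<in>G N m. \<not> c312 N u \<longrightarrow> (\<forall>v\<in>G N m. len N v \<le> len N u)" using un2 u1 by blast
  qed
qed


end
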